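(* For all $x\in\mathbb{C}$ and all integers $m$ and $n$ with $n\ge0$, \[ \sum_{k=0}^n x^k\big(F_mL_{mk}+(xL_m-2)F_{m(k+1)}\big)=x^{n+1}L_mF_{m(n+1)} \] and \[ \sum_{k=0}^n x^k\big(5F_mF_{mk}+(xL_m-2)L_{m(k+1)}\big)=L_m\big(x^{n+1}L_{m(n+1)}-2\big). \]
   Context: $F_n$ and $L_n$ are the Fibonacci and Lucas numbers: $F_0=0$, $F_1=1$, $L_0=2$, $L_1=1$, $W_n=W_{n-1}+W_{n-2}$, extended to negative indices by $F_{-n}=(-1)^{n-1}F_n$ and $L_{-n}=(-1)^nL_n$. *)

theory Defs
  imports Complex_Main
begin

fun fibn :: "nat \<Rightarrow> int" where
  "fibn 0 = 0"
| "fibn (Suc 0) = 1"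
| "fibn (Suc (Suc n)) = fibn (Suc n) + fibn n"

fun lucn :: "nat \<Rightarrow> int" where
  "lucn 0 = 2"
| "lucn (Suc 0) = 1"
| "lucn (Suc (Suc n)) = lucn (Suc n) + lucn n"

definition Fib :: "int \<Rightarrow> int" where
  "Fib n = (if n \<ge> 0 then fibn (nat n) else (-1) ^ (nat (-n) + 1) * fibn (nat (-n)))"

definition Luc :: "int \<Rightarrow> int" where
  "Luc n = (if n \<ge> 0 then lucn (nat n) else (-1) ^ nat (-n) * lucn (nat (-n)))"

end

theory Submission
  imports Defs
begin

lemma int_induct2:
  fixes P :: "int \<Rightarrow> bool"
  assumes "P 0" "P 1" "\<And>n. P n \<Longrightarrow> P (n+1) \<Longrightarrow> P (n+2)"
    "\<And>n. P (n+1) \<Longrightarrow> P (n+2) \<Longrightarrow> P n"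
  shows "P n"
proof -
  have A: "P (int k) \<and> P (int k + 1)" for k
  proof (induction k)
    case 0 then show ?case using assms by simp
  next
    case (Suc k)
    have "P (int k + 2)" using Suc assms(3) by blast
    moreover have "int (Suc k) = int k + 1" "int (Suc k) + 1 = int k + 2" by auto
    ultimately show ?case using Suc by metis
  qed
  have B: "P (- int k) \<and> P (1 - int k)" for k
  proof (induction k)
    case 0 then show ?case using assms by simp
  next
    case (Suc k)
    have "P (- int k - 1)" using Suc assms(4)[of "- int k - 1"] by (simp add: algebra_simps)
    moreover have "- int (Suc k) = - int k - 1" "1 - int (Suc k) = - int k" by auto
    ultimately show ?case using Suc by metis
  qed
  show ?thesis
  proof (cases "n \<ge> 0")
    case True then show ?thesis using A[of "nat n"] by simp
  next
    case False then show ?thesis using B[of "nat (-n)"] by simp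
  qed
qed

lemma Fib_neg: "Fib (- int j) = (-1) ^ (j+1) * fibn j"
  by (cases j) (auto simp: Fib_def simp flip: of_nat_Suc)

lemma Fib_rec: "Fib (n+2) = Fib (n+1) + Fib n"
proof (cases "n \<ge> 0")
  case True
  then obtain k where "n = int k" by (metis nonneg_eq_int)
  then show ?thesis unfolding Fib_def
    by (simp add: nat_add_distrib numeral_2_eq_2)
next
  case False
  define k where "k = nat (- n - 2)"
  show ?thesis
  proof (cases "n = -1")
    case True then show ?thesis by (simp add: Fib_def)
  next
    case f2: False
    have k: "n = - int k - 2" using False f2 unfolding k_def by auto
    have "n + 2 = - int k" "n + 1 = - int (Suc k)" "n = - int (Suc (Suc k))" using k by auto
    note e = this
    have a: "Fib (n+2) = (-1)^(k+1) * fibn k" unfolding e(1) by (rule Fib_neg)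
    have b: "Fib (n+1) = (-1)^(k+2) * fibn (Suc k)" unfolding e(2) Fib_neg by simp
    have c: "Fib n = - ((-1)^k * fibn (Suc (Suc k)))" unfolding e(3) Fib_neg by simp
    show ?thesis unfolding a b c by (simp add: algebra_simps)
  qed
qed

lemma Luc_neg: "Luc (- int j) = (-1) ^ j * lucn j"
  by (cases j) (auto simp: Luc_def simp flip: of_nat_Suc)

lemma Luc_rec: "Luc (n+2) = Luc (n+1) + Luc n"
proof (cases "n \<ge> 0")
  case True
  then obtain k where "n = int k" by (metis nonneg_eq_int)
  then show ?thesis unfolding Luc_def
    by (simp add: nat_add_distrib numeral_2_eq_2)
next
  case False
  define k where "k = nat (- n - 2)"
  show ?thesis
  proof (cases "n = -1")
    case True then show ?thesis by (simp add: Luc_def)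
  next
    case f2: False
    have k: "n = - int k - 2" using False f2 unfolding k_def by auto
    have "n + 2 = - int k" "n + 1 = - int (Suc k)" "n = - int (Suc (Suc k))" using k by auto
    note e = this
    have a: "Luc (n+2) = (-1)^k * lucn k" unfolding e(1) by (rule Luc_neg)
    have b: "Luc (n+1) = (-1)^(k+1) * lucn (Suc k)" unfolding e(2) Luc_neg by simp
    have c: "Luc n = (-1)^(k+2) * lucn (Suc (Suc k))" unfolding e(3) Luc_neg by simp
    show ?thesis unfolding a b c by (simp add: algebra_simps)
  qed
qed

lemma Luc_Fib: "Luc n = 2 * Fib (n+1) - Fib n"
proof (induction n rule: int_induct2)
  case 1 then show ?case by (simp add: Luc_def Fib_def)
next
  case 2 then show ?case by (simp add: Luc_def Fib_def numeral_2_eq_2)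
next
  case (3 n) then show ?case using Luc_rec[of n] Fib_rec[of n] Fib_rec[of "n+1"]
    by (simp add: algebra_simps)
next
  case (4 n) then show ?case using Luc_rec[of n] Fib_rec[of n] Fib_rec[of "n+1"]
    by (simp add: algebra_simps)
qed

lemma Fib_add: "2 * Fib (a+m) = Fib a * Luc m + Fib m * Luc a"
proof (induction a rule: int_induct2)
  case 1 then show ?case by (simp add: Luc_def Fib_def)
next
  case 2 then show ?case using Luc_Fib[of m] by (simp add: Luc_def Fib_def add.commute)
next
  case (3 n) then show ?case using Luc_rec[of n] Fib_rec[of n] Fib_rec[of "n+m"]
    by (simp add: algebra_simps)
next
  case (4 n) then show ?case using Luc_rec[of n] Fib_rec[of n] Fib_rec[of "n+m"]
    by (simp add: algebra_simps)
qed

lemma Luc_add: "2 * Luc (a+m) = Luc a * Luc m + 5 * Fib a * Fib m"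
proof (induction a rule: int_induct2)
  case 1 then show ?case by (simp add: Luc_def Fib_def)
next
  case 2 then show ?case using Luc_Fib[of m] Luc_Fib[of "m+1"] Fib_rec[of m]
    by (simp add: Luc_def Fib_def algebra_simps)
next
  case (3 n) then show ?case using Luc_rec[of n] Fib_rec[of n] Luc_rec[of "n+m"]
    by (simp add: algebra_simps)
next
  case (4 n) then show ?case using Luc_rec[of n] Fib_rec[of n] Luc_rec[of "n+m"]
    by (simp add: algebra_simps)
qed

theorem proposition2:
  fixes x :: complex and m :: int and n :: nat
  shows "((\<Sum>k=0..n. x ^ k * (of_int (Fib m * Luc (m * int k))
            + (x * of_int (Luc m) - 2) * of_int (Fib (m * (int k + 1)))))
         = x ^ (n + 1) * of_int (Luc m) * of_int (Fib (m * (int n + 1))))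
    \<and> ((\<Sum>k=0..n. x ^ k * (5 * of_int (Fib m * Fib (m * int k))
            + (x * of_int (Luc m) - 2) * of_int (Luc (m * (int k + 1)))))
         = of_int (Luc m) * (x ^ (n + 1) * of_int (Luc (m * (int n + 1))) - 2))"
proof
  show "(\<Sum>k=0..n. x ^ k * (of_int (Fib m * Luc (m * int k))
            + (x * of_int (Luc m) - 2) * of_int (Fib (m * (int k + 1)))))
         = x ^ (n + 1) * of_int (Luc m) * of_int (Fib (m * (int n + 1)))"
  proof (induction n)
    case 0 then show ?case by (simp add: Luc_def Fib_def algebra_simps)
  next
    case (Suc n)
    define a where "a = m * (int n + 1)"
    have e: "m * (int (Suc n) + 1) = a + m" "m * int (Suc n) = a" unfolding a_def by (auto simp: algebra_simps)
    have A: "2 * (of_int (Fib (a+m)) :: complex) = of_int (Fib a) * of_int (Luc m) + of_int (Fib m) * of_int (Luc a)"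
      using arg_cong[OF Fib_add[of a m], of "of_int :: int \<Rightarrow> complex"] by simp
    show ?case unfolding sum.atLeast0_atMost_Suc Suc e a_def[symmetric]
      by (simp add: algebra_simps A)
  qed
next
  show "(\<Sum>k=0..n. x ^ k * (5 * of_int (Fib m * Fib (m * int k))
            + (x * of_int (Luc m) - 2) * of_int (Luc (m * (int k + 1)))))
         = of_int (Luc m) * (x ^ (n + 1) * of_int (Luc (m * (int n + 1))) - 2)"
  proof (induction n)
    case 0 then show ?case by (simp add: Luc_def Fib_def algebra_simps)
  next
    case (Suc n)
    define a where "a = m * (int n + 1)"
    have e: "m * (int (Suc n) + 1) = a + m" "m * int (Suc n) = a" unfolding a_def by (auto simp: algebra_simps)
    have A: "2 * (of_int (Luc (a+m)) :: complex) = of_int (Luc a) * of_int (Luc m) + 5 * of_int (Fib a) * of_int (Fib m)"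
      using arg_cong[OF Luc_add[of a m], of "of_int :: int \<Rightarrow> complex"] by simp
    show ?case unfolding sum.atLeast0_atMost_Suc Suc e a_def[symmetric]
      by (simp add: algebra_simps A)
  qed
qed

end
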